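(* For every command $c$ of the While-language, stores $\sigma,\sigma'$ and status flag $\delta$: if $(c,\sigma,\Downarrow)\Rightarrow^{co}_G\sigma',\delta$ and not $(c,\sigma,\Downarrow)\Rightarrow_G\sigma',\delta$, then $(c,\sigma,\Downarrow)\Rightarrow^{co}_G\sigma',\Uparrow$.
   Context: While-language syntax: variables $x$ range over a countably infinite set $\mathit{Var}$; $n$ ranges over natural numbers; values are $v ::= \mathsf{null}\mid n$ ($\mathsf{null}$ distinct from every natural number); expressions are $e ::= v\mid x\mid e_1\oplus e_2$ with $\oplus\in\{+,-,*\}$, where $\oplus(n_1,n_2)$ is the result of the operation on naturals; commands are $c ::= \mathsf{skip}\mid\mathsf{alloc}\ x\mid x:=e\mid c_1;c_2\mid \mathsf{if}\ e\ c_1\ c_2\mid\mathsf{while}\ e\ c$. A store $\sigma$ is a finite partial map from $\mathit{Var}$ to values, with domain $\mathrm{dom}(\sigma)$, lookup $\sigma(x)$, update $\sigma[x\mapsto v]$. Flag-based big-step semantics: status flags $\delta ::= \Downarrow\mid\Uparrow$ (convergent / divergent). Expression evaluation $(e,\sigma,\delta)\Rightarrow_{GE}v,\delta'$ is the least relation with: $(v,\sigma,\Downarrow)\Rightarrow_{GE}v,\Downarrow$; $(x,\sigma,\Downarrow)\Rightarrow_{GE}\sigma(x),\Downarrow$ if $x\in\mathrm{dom}(\sigma)$; if $(e_1,\sigma,\Downarrow)\Rightarrow_{GE}n_1,\delta$ and $(e_2,\sigma,\delta)\Rightarrow_{GE}n_2,\delta'$ ($n_1,n_2$ naturals) then $(e_1\oplus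 e_2,\sigma,\Downarrow)\Rightarrow_{GE}\oplus(n_1,n_2),\delta'$; and $(e,\sigma,\Uparrow)\Rightarrow_{GE}v,\Uparrow$ for every value $v$. The command rules for judgments $(c,\sigma,\delta)\Rightarrow_G\sigma',\delta'$ are: $(\mathsf{skip},\sigma,\Downarrow)\Rightarrow_G\sigma,\Downarrow$; $(\mathsf{alloc}\ x,\sigma,\Downarrow)\Rightarrow_G\sigma[x\mapsto\mathsf{null}],\Downarrow$ if $x\notin\mathrm{dom}(\sigma)$; $(x:=e,\sigma,\Downarrow)\Rightarrow_G\sigma[x\mapsto v],\delta$ if $x\in\mathrm{dom}(\sigma)$ and $(e,\sigma,\Downarrow)\Rightarrow_{GE}v,\delta$; $(c_1;c_2,\sigma,\Downarrow)\Rightarrow_G\sigma'',\delta'$ if $(c_1,\sigma,\Downarrow)\Rightarrow_G\sigma',\delta$ and $(c_2,\sigma',\delta)\Rightarrow_G\sigma'',\delta'$; $(\mathsf{if}\ e\ c_1\ c_2,\sigma,\Downarrow)\Rightarrow_G\sigma',\delta'$ if $v\ne0$, $(e,\sigma,\Downarrow)\Rightarrow_{GE}v,\delta$ and $(c_1,\sigma,\delta)\Rightarrow_G\sigma',\delta'$; $(\mathsf{if}\ e\ c_1\ c_2,\sigma,\Downarrow)\Rightarrow_G\sigma',\delta'$ if $(e,\sigma,\Downarrow)\Rightarrow_{GE}0,\delta$ and $(c_2,\sigma,\delta)\Rightarrow_G\sigma',\delta'$; $(\mathsf{while}\ e\ c,\sigma,\Downarrow)\Rightarrow_G\sigma'',\delta''$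 if $(e,\sigma,\Downarrow)\Rightarrow_{GE}v,\delta$, $v\ne0$, $(c,\sigma,\delta)\Rightarrow_G\sigma',\delta'$ and $(\mathsf{while}\ e\ c,\sigma',\delta')\Rightarrow_G\sigma'',\delta''$; $(\mathsf{while}\ e\ c,\sigma,\Downarrow)\Rightarrow_G\sigma,\delta$ if $(e,\sigma,\Downarrow)\Rightarrow_{GE}0,\delta$; $(c,\sigma,\Uparrow)\Rightarrow_G\sigma',\Uparrow$ for every store $\sigma'$. $\Rightarrow_G$ is the inductive interpretation (least relation closed under these rules) and $\Rightarrow^{co}_G$ the coinductive interpretation of the same rules (greatest relation such that every element is the conclusion of a rule instance whose command premises lie in it). *)

theory Defs
  imports Main "HOL-Library.Finite_Map"
begin

type_synonym var = nat

datatype val = Null | Num nat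

datatype bop = Plus | Minus | Times

fun bop_sem :: "bop \<Rightarrow> nat \<Rightarrow> nat \<Rightarrow> nat" where
  "bop_sem Plus a b = a + b"
| "bop_sem Minus a b = a - b"
| "bop_sem Times a b = a * b"

datatype exp = V val | Var var | Op bop exp exp

datatype com = Skip | Alloc var | Assign var exp | Seq com com
  | If exp com com | While exp com

datatype flag = Conv | Div

type_synonym store = "(var, val) fmap"

inductive GE :: "exp \<Rightarrow> store \<Rightarrow> flag \<Rightarrow> val \<Rightarrow> flag \<Rightarrow> bool" where
  ge_val: "GE (V v) \<sigma> Conv v Conv"
| ge_var: "x |\<in>| fmdom \<sigma> \<Longrightarrow> GE (Var x) \<sigma> Conv (the (fmlookup \<sigma> x)) Conv"
| ge_op: "GE e1 \<sigma> Conv (Num n1) d \<Longrightarrow> GE e2 \<sigma> d (Num n2) d' \<Longrightarrow>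
          GE (Op op e1 e2) \<sigma> Conv (Num (bop_sem op n1 n2)) d'"
| ge_div: "GE e \<sigma> Div v Div"

inductive G :: "com \<Rightarrow> store \<Rightarrow> flag \<Rightarrow> store \<Rightarrow> flag \<Rightarrow> bool" where
  g_skip: "G Skip \<sigma> Conv \<sigma> Conv"
| g_alloc: "x |\<notin>| fmdom \<sigma> \<Longrightarrow> G (Alloc x) \<sigma> Conv (fmupd x Null \<sigma>) Conv"
| g_assign: "x |\<in>| fmdom \<sigma> \<Longrightarrow> GE e \<sigma> Conv v d \<Longrightarrow> G (Assign x e) \<sigma> Conv (fmupd x v \<sigma>) d"
| g_seq: "G c1 \<sigma> Conv \<sigma>' d \<Longrightarrow> G c2 \<sigma>' d \<sigma>'' d' \<Longrightarrow> G (Seq c1 c2) \<sigma> Conv \<sigma>'' d'"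
| g_if_t: "v \<noteq> Num 0 \<Longrightarrow> GE e \<sigma> Conv v d \<Longrightarrow> G c1 \<sigma> d \<sigma>' d' \<Longrightarrow> G (If e c1 c2) \<sigma> Conv \<sigma>' d'"
| g_if_f: "GE e \<sigma> Conv (Num 0) d \<Longrightarrow> G c2 \<sigma> d \<sigma>' d' \<Longrightarrow> G (If e c1 c2) \<sigma> Conv \<sigma>' d'"
| g_while_t: "GE e \<sigma> Conv v d \<Longrightarrow> v \<noteq> Num 0 \<Longrightarrow> G c \<sigma> d \<sigma>' d' \<Longrightarrow>
              G (While e c) \<sigma>' d' \<sigma>'' d'' \<Longrightarrow> G (While e c) \<sigma> Conv \<sigma>'' d''"
| g_while_f: "GE e \<sigma> Conv (Num 0) d \<Longrightarrow> G (While e c) \<sigma> Conv \<sigma> d"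
| g_div: "G c \<sigma> Div \<sigma>' Div"

coinductive Gco :: "com \<Rightarrow> store \<Rightarrow> flag \<Rightarrow> store \<Rightarrow> flag \<Rightarrow> bool" where
  gco_skip: "Gco Skip \<sigma> Conv \<sigma> Conv"
| gco_alloc: "x |\<notin>| fmdom \<sigma> \<Longrightarrow> Gco (Alloc x) \<sigma> Conv (fmupd x Null \<sigma>) Conv"
| gco_assign: "x |\<in>| fmdom \<sigma> \<Longrightarrow> GE e \<sigma> Conv v d \<Longrightarrow> Gco (Assign x e) \<sigma> Conv (fmupd x v \<sigma>) d"
| gco_seq: "Gco c1 \<sigma> Conv \<sigma>' d \<Longrightarrow> Gco c2 \<sigma>' d \<sigma>'' d' \<Longrightarrow> Gco (Seq c1 c2) \<sigma> Conv \<sigma>'' d'"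
| gco_if_t: "v \<noteq> Num 0 \<Longrightarrow> GE e \<sigma> Conv v d \<Longrightarrow> Gco c1 \<sigma> d \<sigma>' d' \<Longrightarrow> Gco (If e c1 c2) \<sigma> Conv \<sigma>' d'"
| gco_if_f: "GE e \<sigma> Conv (Num 0) d \<Longrightarrow> Gco c2 \<sigma> d \<sigma>' d' \<Longrightarrow> Gco (If e c1 c2) \<sigma> Conv \<sigma>' d'"
| gco_while_t: "GE e \<sigma> Conv v d \<Longrightarrow> v \<noteq> Num 0 \<Longrightarrow> Gco c \<sigma> d \<sigma>' d' \<Longrightarrow>
              Gco (While e c) \<sigma>' d' \<sigma>'' d'' \<Longrightarrow> Gco (While e c) \<sigma> Conv \<sigma>'' d''"
| gco_while_f: "GE e \<sigma> Conv (Num 0) d \<Longrightarrow> Gco (While e c) \<sigma> Conv \<sigma> d"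
| gco_div: "Gco c \<sigma> Div \<sigma>' Div"

end

theory Submission
  imports Defs
begin

lemma gco_div_flag: "Gco c s Div s' d \<Longrightarrow> d = Div"
  by (erule Gco.cases) auto

lemma aux:
  assumes "Gco c \<sigma> Conv \<sigma>' \<delta>" and "\<not> G c \<sigma> Conv \<sigma>' \<delta>"
  shows "Gco c \<sigma> Conv \<sigma>' Div"
  using assms
proof (coinduction arbitrary: c \<sigma> \<sigma>' \<delta>)
  case (Gco c \<sigma> \<sigma>' \<delta>)
  from Gco(1) show ?case
  proof cases
    case gco_skip then show ?thesis using Gco(2) by (auto intro: G.intros)
  next
    case (gco_alloc x) then show ?thesis using Gco(2) by (auto intro: G.intros)
  next
    case (gco_assign x e v) then show ?thesis using Gco(2) by (auto intro: G.intros)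
  next
    case (gco_seq c1 s1 d c2)
    show ?thesis
    proof (cases "G c1 \<sigma> Conv s1 d")
      case True
      with gco_seq Gco(2) have n2: "\<not> G c2 s1 d \<sigma>' \<delta>" by (auto intro: G.intros)
      moreover have "Gco c2 s1 d \<sigma>' \<delta>" using gco_seq by simp
      ultimately have "d = Conv" by (cases d) (auto dest: gco_div_flag intro: G.g_div)
      with gco_seq n2 show ?thesis by auto
    next
      case False
      with gco_seq show ?thesis by (auto intro: Gco.intros)
    qed
  next
    case (gco_if_t v e d c1 c2)
    have n: "\<not> G c1 \<sigma> d \<sigma>' \<delta>" using gco_if_t Gco(2) by (auto intro: G.intros)
    moreover have "Gco c1 \<sigma> d \<sigma>' \<delta>" using gco_if_t by simp
    ultimately have "d = Conv" by (cases d) (auto dest: gco_div_flag intro: G.g_div)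
    with gco_if_t n show ?thesis by auto
  next
    case (gco_if_f e d c2 c1)
    have n: "\<not> G c2 \<sigma> d \<sigma>' \<delta>" using gco_if_f Gco(2) by (auto intro: G.intros)
    moreover have "Gco c2 \<sigma> d \<sigma>' \<delta>" using gco_if_f by simp
    ultimately have "d = Conv" by (cases d) (auto dest: gco_div_flag intro: G.g_div)
    with gco_if_f n show ?thesis by auto
  next
    case (gco_while_t e v d cb s1 d1)
    show ?thesis
    proof (cases "G cb \<sigma> d s1 d1")
      case True
      with gco_while_t Gco(2) have n2: "\<not> G (While e cb) s1 d1 \<sigma>' \<delta>" by (auto intro: G.intros)
      moreover have "Gco (While e cb) s1 d1 \<sigma>' \<delta>" using gco_while_t by simp
      ultimately have "d1 = Conv" by (cases d1) (auto dest: gco_div_flag intro: G.g_div)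
      note f = gco_while_t n2 True \<open>d1 = Conv\<close>
      show ?thesis
        apply (rule disjI2, rule disjI2, rule disjI2, rule disjI2, rule disjI2, rule disjI2, rule disjI1)
        using f by blast
    next
      case False
      moreover have "Gco cb \<sigma> d s1 d1" using gco_while_t by simp
      ultimately have "d = Conv" by (cases d) (auto dest: gco_div_flag intro: G.g_div)
      note f = gco_while_t False \<open>d = Conv\<close> Gco.gco_div
      show ?thesis
        apply (rule disjI2, rule disjI2, rule disjI2, rule disjI2, rule disjI2, rule disjI2, rule disjI1)
        using f by blast
    qed
  next
    case gco_while_f then show ?thesis using Gco(2) by (auto intro: G.intros)
  qed
qed

theorem lemma19:
  fixes c :: com and \<sigma> \<sigma>' :: store and \<delta> :: flag
  assumes "Gco c \<sigma> Conv \<sigma>' \<delta>"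
      and "\<not> G c \<sigma> Conv \<sigma>' \<delta>"
  shows "Gco c \<sigma> Conv \<sigma>' Div"
  using aux assms by blast

end
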